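(* Let $p$ be an odd prime, $l\ge 2$ an integer, and $d$ a positive integer with $p\nmid d$. Then the arithmetic progression $p^l+6dn$, $n=0,1,2,\ldots$, contains no $p$ consecutive terms $p^l+6dn,\,p^l+6d(n+1),\ldots,p^l+6d(n+p-1)$ that are all prime; i.e. it contains no $p$-tuple of primes. *)

theory Defs
  imports "HOL-Computational_Algebra.Primes"
begin

end

theory Submission
  imports Defs
begin

theorem corollary3p5:
  fixes p l d :: nat
  assumes "prime p" and "odd p" and "l \<ge> 2" and "d > 0" and "\<not> p dvd d"
  shows "\<not> (\<exists>n::nat. \<forall>k<p. prime (p ^ l + 6 * d * (n + k)))"
proof
  assume "\<exists>n::nat. \<forall>k<p. prime (p ^ l + 6 * d * (n + k))"
  then obtain n where H: "\<forall>k<p. prime (p ^ l + 6 * d * (n + k))" by blast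
  have p1: "p > 1" using assms(1) prime_gt_1_nat by blast
  define k where "k = (p - n mod p) mod p"
  have kp: "k < p" using p1 unfolding k_def by simp
  have dv: "p dvd (n + k)"
  proof (cases "n mod p = 0")
    case True then show ?thesis unfolding k_def by (simp add: mod_eq_0_iff_dvd)
  next
    case False
    then have "k = p - n mod p" unfolding k_def using p1
      by (simp add: mod_less)
    moreover have "n mod p < p" using p1 by simp
    moreover have "n = (n div p) * p + n mod p" by simp
    ultimately have "n + k = (n div p) * p + p" by linarith
    then show ?thesis by simp
  qed
  have pl: "p dvd p ^ l" using assms(3) by (simp add: dvd_power)
  have dv2: "p dvd p ^ l + 6 * d * (n + k)" using dv pl by simp
  have "p ^ 2 \<le> p ^ l" using assms(3) p1 by (simp add: power_increasing)
  moreover have "p < p ^ 2" using p1 by (simp add: power2_eq_square)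
  ultimately have big: "p < p ^ l + 6 * d * (n + k)" by linarith
  have "prime (p ^ l + 6 * d * (n + k))" using H kp by blast
  then have "p = 1 \<or> p = p ^ l + 6 * d * (n + k)" using dv2 prime_nat_iff by blast
  with big p1 show False by linarith
qed

end
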